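(* Let $G=(V,E)$ be a finite graph, $A\subset V$ with $|A|$ even, $x_e>0$ and $p_e\in[0,1)$ for $e\in E$. Then for all $\omega\in\{0,1\}^E$, $$2^{|\omega|}(\ell^A_x\cup\mathbb{P}_p)[\omega]\propto\Big(\ell^A_{\frac{2x}{1+p}}\cup\mathbb{P}_{\frac{2p}{1+p}}\Big)[\omega].$$ In particular, if $J_e>0$ and $t_e=\tanh(J_e)$, then $2^{|\omega|}(\ell^A_t\cup\mathbb{P}_{t^2})[\omega]\propto\mathbf{P}^A_{2J}[\omega]$.
   Context: Configurations are identified with sets of open edges; $|\omega|$ is the number of open edges. $\partial F$ denotes the set of odd-degree vertices of $(V,F)$. For positive weights $y$, $\ell^A_y[\omega]\propto\prod_{e\in\omega}y_e\mathbf{1}[\partial\omega=A]$. $\mathbb{P}_r$ is Bernoulli percolation with edge $e$ open with probability $r_e$; vector operations are coordinatewise. $\pi\cup\nu$ is the law of the union of independent samples of $\pi,\nu$. $\mathbf{P}^A_{2J}$ is the single random current with sources $A$ and couplings $(2J_e)$: the law of $\{e:n_e>0\}$ for independent $n_e\sim$ Poisson$(2J_e)$ conditioned on the set of vertices $v$ with $\sum_{e\ni v}n_e$ odd being $A$. The proportionality is as functions of $\omega$ (both sides assumed defined). *)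

theory Defs
  imports "HOL-Probability.Probability"
begin

text \<open>A finite (multi)graph is given by a vertex set V, an edge set E and an
incidence map inc assigning to each edge its pair of endpoints.
Configurations are subsets of E (the open edges).\<close>

definition graph :: "'v set \<Rightarrow> 'e set \<Rightarrow> ('e \<Rightarrow> 'v \<times> 'v) \<Rightarrow> bool" where
  "graph V E inc \<longleftrightarrow> finite V \<and> finite E \<and>
     (\<forall>e\<in>E. fst (inc e) \<in> V \<and> snd (inc e) \<in> V \<and> fst (inc e) \<noteq> snd (inc e))"

definition mult :: "('e \<Rightarrow> 'v \<times> 'v) \<Rightarrow> 'e \<Rightarrow> 'v \<Rightarrow> nat" where
  "mult inc e v = (if fst (inc e) = v then 1 else 0) + (if snd (inc e) = v then 1 else 0)"

definition sources :: "'v set \<Rightarrow> 'e set \<Rightarrow> ('e \<Rightarrow> 'v \<times> 'v) \<Rightarrow> ('e \<Rightarrow> nat) \<Rightarrow> 'v set" where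
  "sources V E inc n = {v\<in>V. odd (\<Sum>e\<in>E. n e * mult inc e v)}"

definition bdry :: "'v set \<Rightarrow> 'e set \<Rightarrow> ('e \<Rightarrow> 'v \<times> 'v) \<Rightarrow> 'e set \<Rightarrow> 'v set" where
  "bdry V E inc F = sources V E inc (\<lambda>e. if e \<in> F then 1 else 0)"

definition loop_weight :: "'v set \<Rightarrow> 'e set \<Rightarrow> ('e \<Rightarrow> 'v \<times> 'v) \<Rightarrow> 'v set \<Rightarrow> ('e \<Rightarrow> real) \<Rightarrow> 'e set \<Rightarrow> real" where
  "loop_weight V E inc A y \<omega> = (if \<omega> \<subseteq> E \<and> bdry V E inc \<omega> = A then \<Prod>e\<in>\<omega>. y e else 0)"

definition loop_measure :: "'v set \<Rightarrow> 'e set \<Rightarrow> ('e \<Rightarrow> 'v \<times> 'v) \<Rightarrow> 'v set \<Rightarrow> ('e \<Rightarrow> real) \<Rightarrow> 'e set \<Rightarrow> real" where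
  "loop_measure V E inc A y \<omega> =
     loop_weight V E inc A y \<omega> / (\<Sum>F\<in>Pow E. loop_weight V E inc A y F)"

definition perc :: "'e set \<Rightarrow> ('e \<Rightarrow> real) \<Rightarrow> 'e set \<Rightarrow> real" where
  "perc E r \<omega> = (if \<omega> \<subseteq> E then (\<Prod>e\<in>\<omega>. r e) * (\<Prod>e\<in>E - \<omega>. 1 - r e) else 0)"

text \<open>Law of the union of independent samples of two laws on configurations.\<close>
definition union_law :: "'e set \<Rightarrow> ('e set \<Rightarrow> real) \<Rightarrow> ('e set \<Rightarrow> real) \<Rightarrow> 'e set \<Rightarrow> real" where
  "union_law E \<pi> \<nu> \<omega> = (\<Sum>a\<in>Pow E. \<Sum>b\<in>Pow E. if a \<union> b = \<omega> then \<pi> a * \<nu> b else 0)"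

definition random_current :: "'v set \<Rightarrow> 'e set \<Rightarrow> ('e \<Rightarrow> 'v \<times> 'v) \<Rightarrow> 'v set \<Rightarrow> ('e \<Rightarrow> real) \<Rightarrow> 'e set pmf" where
  "random_current V E inc A J =
     map_pmf (\<lambda>n. {e\<in>E. n e > 0})
       (cond_pmf (Pi_pmf E 0 (\<lambda>e. poisson_pmf (2 * J e))) {n. sources V E inc n = A})"

definition proportional :: "'e set \<Rightarrow> ('e set \<Rightarrow> real) \<Rightarrow> ('e set \<Rightarrow> real) \<Rightarrow> bool" where
  "proportional E f g \<longleftrightarrow> (\<exists>c>0. \<forall>\<omega>. \<omega> \<subseteq> E \<longrightarrow> f \<omega> = c * g \<omega>)"

end

theory Submission imports Defs begin

definition psi :: "'v set \<Rightarrow> 'e set \<Rightarrow> ('e \<Rightarrow> 'v \<times> 'v) \<Rightarrow> 'v set \<Rightarrow> ('e \<Rightarrow> real) \<Rightarrow> ('e \<Rightarrow> real) \<Rightarrow> ('e \<Rightarrow> real) \<Rightarrow> 'e set \<Rightarrow> real" where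
  "psi V E inc A u v w \<omega> = (\<Sum>a\<in>{a\<in>Pow \<omega>. bdry V E inc a = A}.
      (\<Prod>e\<in>a. u e) * (\<Prod>e\<in>\<omega>-a. v e) * (\<Prod>e\<in>E-\<omega>. w e))"

lemma psi_cong:
  assumes "\<omega> \<subseteq> E" "\<forall>e\<in>E. u e = u' e" "\<forall>e\<in>E. v e = v' e" "\<forall>e\<in>E. w e = w' e"
  shows "psi V E inc A u v w \<omega> = psi V E inc A u' v' w' \<omega>"
  unfolding psi_def
proof (rule sum.cong[OF refl])
  fix a assume "a \<in> {a\<in>Pow \<omega>. bdry V E inc a = A}"
  then have a: "a \<subseteq> E" using assms(1) by auto
  have "(\<Prod>e\<in>a. u e) = (\<Prod>e\<in>a. u' e)" using a assms(2) by (intro prod.cong) auto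
  moreover have "(\<Prod>e\<in>\<omega>-a. v e) = (\<Prod>e\<in>\<omega>-a. v' e)" using assms(1,3) by (intro prod.cong) auto
  moreover have "(\<Prod>e\<in>E-\<omega>. w e) = (\<Prod>e\<in>E-\<omega>. w' e)" using assms(4) by (intro prod.cong) auto
  ultimately show "(\<Prod>e\<in>a. u e) * (\<Prod>e\<in>\<omega>-a. v e) * (\<Prod>e\<in>E-\<omega>. w e) =
      (\<Prod>e\<in>a. u' e) * (\<Prod>e\<in>\<omega>-a. v' e) * (\<Prod>e\<in>E-\<omega>. w' e)" by simp
qed

lemma psi_scale:
  assumes fin: "finite E" and om: "\<omega> \<subseteq> E"
  shows "psi V E inc A (\<lambda>e. k e * c e * u e) (\<lambda>e. k e * c e * v e) (\<lambda>e. c e * w e) \<omega>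
       = (\<Prod>e\<in>\<omega>. k e) * (\<Prod>e\<in>E. c e) * psi V E inc A u v w \<omega>"
  unfolding psi_def sum_distrib_left
proof (rule sum.cong[OF refl])
  fix a assume "a \<in> {a\<in>Pow \<omega>. bdry V E inc a = A}"
  then have a: "a \<subseteq> \<omega>" by auto
  have fo: "finite \<omega>" using fin om finite_subset by blast
  have ka: "(\<Prod>e\<in>\<omega>. k e) = (\<Prod>e\<in>\<omega>-a. k e) * (\<Prod>e\<in>a. k e)" by (rule prod.subset_diff[OF a fo])
  have ca: "(\<Prod>e\<in>\<omega>. c e) = (\<Prod>e\<in>\<omega>-a. c e) * (\<Prod>e\<in>a. c e)" by (rule prod.subset_diff[OF a fo])
  have cE: "(\<Prod>e\<in>E. c e) = (\<Prod>e\<in>E-\<omega>. c e) * (\<Prod>e\<in>\<omega>. c e)" by (rule prod.subset_diff[OF om fin])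
  show "(\<Prod>e\<in>a. k e * c e * u e) * (\<Prod>e\<in>\<omega> - a. k e * c e * v e) * (\<Prod>e\<in>E - \<omega>. c e * w e) =
         (\<Prod>e\<in>\<omega>. k e) * (\<Prod>e\<in>E. c e) * ((\<Prod>e\<in>a. u e) * (\<Prod>e\<in>\<omega> - a. v e) * (\<Prod>e\<in>E - \<omega>. w e))"
    unfolding ka cE ca prod.distrib by (simp add: mult_ac)
qed

lemma inner_perc:
  assumes fin: "finite E" and om: "\<omega> \<subseteq> E" and a: "a \<subseteq> \<omega>"
  shows "(\<Sum>b\<in>Pow E. if a \<union> b = \<omega> then perc E p b else 0)
       = (\<Prod>e\<in>\<omega>-a. p e) * (\<Prod>e\<in>E-\<omega>. 1 - p e)"
proof -
  have fo: "finite \<omega>" using fin om finite_subset by blast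
  have fa: "finite a" using fo a finite_subset by blast
  have "(\<Sum>b\<in>Pow E. if a \<union> b = \<omega> then perc E p b else 0) = (\<Sum>b\<in>{b\<in>Pow E. a \<union> b = \<omega>}. perc E p b)"
    using sum.inter_filter[of "Pow E" "perc E p" "\<lambda>b. a \<union> b = \<omega>"] fin by simp
  also have "{b\<in>Pow E. a \<union> b = \<omega>} = (\<lambda>c. (\<omega>-a) \<union> c) ` Pow a"
  proof (rule set_eqI)
    fix b show "b \<in> {b\<in>Pow E. a \<union> b = \<omega>} \<longleftrightarrow> b \<in> (\<lambda>c. (\<omega>-a) \<union> c) ` Pow a"
    proof
      assume "b \<in> {b\<in>Pow E. a \<union> b = \<omega>}"
      then have "b = (\<omega>-a) \<union> (b \<inter> a)" "b \<inter> a \<in> Pow a" by auto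
      then show "b \<in> (\<lambda>c. (\<omega>-a) \<union> c) ` Pow a" by blast
    next
      assume "b \<in> (\<lambda>c. (\<omega>-a) \<union> c) ` Pow a"
      then show "b \<in> {b\<in>Pow E. a \<union> b = \<omega>}" using a om by auto
    qed
  qed
  also have "inj_on (\<lambda>c. (\<omega>-a) \<union> c) (Pow a)"
    by (rule inj_onI) auto
  then have "(\<Sum>b\<in>(\<lambda>c. (\<omega>-a) \<union> c) ` Pow a. perc E p b) = (\<Sum>c\<in>Pow a. perc E p ((\<omega>-a) \<union> c))"
    by (rule sum.reindex_cong) auto
  also have "\<dots> = (\<Sum>c\<in>Pow a. ((\<Prod>e\<in>\<omega>-a. p e) * (\<Prod>e\<in>E-\<omega>. 1 - p e)) * ((\<Prod>e\<in>c. p e) * (\<Prod>e\<in>a-c. 1 - p e)))"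
  proof (rule sum.cong[OF refl])
    fix c assume "c \<in> Pow a"
    then have c: "c \<subseteq> a" by auto
    have fc: "finite c" using fa c finite_subset by blast
    have s: "(\<omega>-a) \<union> c \<subseteq> E" using om a c by auto
    have e1: "(\<Prod>e\<in>(\<omega>-a) \<union> c. p e) = (\<Prod>e\<in>\<omega>-a. p e) * (\<Prod>e\<in>c. p e)"
      by (rule prod.union_disjoint) (use fo fc c in auto)
    have eq: "E - ((\<omega>-a) \<union> c) = (E-\<omega>) \<union> (a-c)" using om a c by auto
    have e2: "(\<Prod>e\<in>(E-\<omega>) \<union> (a-c). 1 - p e) = (\<Prod>e\<in>E-\<omega>. 1 - p e) * (\<Prod>e\<in>a-c. 1 - p e)"
      by (rule prod.union_disjoint) (use fin fa a in auto)
    show "perc E p ((\<omega>-a) \<union> c) = ((\<Prod>e\<in>\<omega>-a. p e) * (\<Prod>e\<in>E-\<omega>. 1 - p e)) * ((\<Prod>e\<in>c. p e) * (\<Prod>e\<in>a-c. 1 - p e))"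
      unfolding perc_def using s e1 e2 eq by (simp add: mult_ac)
  qed
  also have "\<dots> = ((\<Prod>e\<in>\<omega>-a. p e) * (\<Prod>e\<in>E-\<omega>. 1 - p e)) * (\<Sum>c\<in>Pow a. (\<Prod>e\<in>c. p e) * (\<Prod>e\<in>a-c. 1 - p e))"
    by (simp add: sum_distrib_left)
  also have "(\<Sum>c\<in>Pow a. (\<Prod>e\<in>c. p e) * (\<Prod>e\<in>a-c. 1 - p e)) = 1"
    using prod_add[OF fa, of p "\<lambda>e. 1 - p e"] by simp
  finally show ?thesis by simp
qed

lemma union_psi:
  assumes fin: "finite E" and om: "\<omega> \<subseteq> E"
  shows "union_law E (loop_measure V E inc A y) (perc E p) \<omega>
       = psi V E inc A y p (\<lambda>e. 1 - p e) \<omega> / (\<Sum>F\<in>Pow E. loop_weight V E inc A y F)"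
proof -
  define Z where "Z = (\<Sum>F\<in>Pow E. loop_weight V E inc A y F)"
  define X where "X = {a\<in>Pow \<omega>. bdry V E inc a = A}"
  define T where "T = (\<lambda>a. (\<Prod>e\<in>a. y e) * (\<Prod>e\<in>\<omega>-a. p e) * (\<Prod>e\<in>E-\<omega>. 1 - p e))"
  have "union_law E (loop_measure V E inc A y) (perc E p) \<omega>
      = (\<Sum>a\<in>Pow E. if a \<in> X then T a / Z else 0)"
    unfolding union_law_def
  proof (rule sum.cong[OF refl])
    fix a assume aE: "a \<in> Pow E"
    have "(\<Sum>b\<in>Pow E. if a \<union> b = \<omega> then loop_measure V E inc A y a * perc E p b else 0)
        = loop_measure V E inc A y a * (\<Sum>b\<in>Pow E. if a \<union> b = \<omega> then perc E p b else 0)"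
      by (subst sum_distrib_left) (rule sum.cong, auto)
    also have "\<dots> = (if a \<in> X then T a / Z else 0)"
    proof (cases "a \<subseteq> \<omega>")
      case True
      then show ?thesis using aE unfolding inner_perc[OF fin om True] loop_measure_def loop_weight_def X_def T_def Z_def
        by auto
    next
      case False
      then have "(\<Sum>b\<in>Pow E. if a \<union> b = \<omega> then perc E p b else 0) = 0"
        by (intro sum.neutral) auto
      then show ?thesis using False unfolding X_def by auto
    qed
    finally show "(\<Sum>b\<in>Pow E. if a \<union> b = \<omega> then loop_measure V E inc A y a * perc E p b else 0)
       = (if a \<in> X then T a / Z else 0)" .
  qed
  also have "\<dots> = (\<Sum>a\<in>Pow E \<inter> X. T a / Z)"
    using fin by (simp add: sum.inter_restrict)
  also have "Pow E \<inter> X = X" using om unfolding X_def by auto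
  finally show ?thesis unfolding psi_def X_def T_def Z_def by (simp add: sum_divide_distrib)
qed

lemma sources_mod:
  assumes "\<forall>e\<in>E. f e mod 2 = f' e mod 2"
  shows "sources V E inc f = sources V E inc f'"
proof -
  have "(\<Sum>e\<in>E. f e * mult inc e v) mod 2 = (\<Sum>e\<in>E. f' e * mult inc e v) mod 2" for v
  proof -
    have "(\<Sum>e\<in>E. f e * mult inc e v) mod 2 = (\<Sum>e\<in>E. (f e * mult inc e v) mod 2) mod 2"
      by (simp add: mod_sum_eq)
    also have "\<dots> = (\<Sum>e\<in>E. (f' e * mult inc e v) mod 2) mod 2"
    proof (rule arg_cong[where f="\<lambda>x. x mod 2"], rule sum.cong[OF refl])
      fix e assume "e \<in> E"
      then have h: "f e mod 2 = f' e mod 2" using assms by blast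
      show "(f e * mult inc e v) mod 2 = (f' e * mult inc e v) mod 2"
        by (metis h mod_mult_left_eq)
    qed
    also have "\<dots> = (\<Sum>e\<in>E. f' e * mult inc e v) mod 2"
      by (simp add: mod_sum_eq)
    finally show ?thesis .
  qed
  then show ?thesis unfolding sources_def odd_iff_mod_2_eq_one by auto
qed


lemma poisson_odd:
  assumes r: "(r::real) > 0"
  shows "measure (poisson_pmf r) {k. odd k} = (1 - exp (-2*r)) / 2"
proof -
  let ?p = "pmf (poisson_pmf r)"
  have s1: "(\<lambda>n. if n \<in> {k. odd k} then ?p n else 0) sums measure (poisson_pmf r) {k. odd k}"
    unfolding measure_pmf_conv_infsetsum by (rule sums_infsetsum_nat) auto
  have s2: "?p sums 1"
    using sums_infsetsum_nat'[OF pmf_abs_summable[of "poisson_pmf r" UNIV]]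
    by (simp add: infsetsum_pmf_eq_1)
  have e: "(\<lambda>n. (-r)^n /\<^sub>R fact n) sums exp (-r)" by (rule exp_converges)
  have s3: "(\<lambda>n. exp (-r) * ((-r)^n /\<^sub>R fact n)) sums (exp (-r) * exp (-r))"
    by (rule sums_mult[OF e])
  have s4: "(\<lambda>n. (?p n - exp (-r) * ((-r)^n /\<^sub>R fact n)) / 2) sums ((1 - exp (-r) * exp (-r)) / 2)"
    by (intro sums_divide sums_diff s2 s3)
  have eq: "(\<lambda>n. (?p n - exp (-r) * ((-r)^n /\<^sub>R fact n)) / 2) = (\<lambda>n. if n \<in> {k. odd k} then ?p n else 0)"
  proof
    fix n
    have pn: "?p n = r^n / fact n * exp (-r)" using r by simp
    have m: "exp (-r) * ((-r)^n /\<^sub>R fact n) = (-1)^n * ?p n"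
    proof -
      have "(-r)^n = (-1)^n * r^n" by (rule power_minus)
      then show ?thesis unfolding pn by (simp add: divide_inverse mult_ac)
    qed
    show "(?p n - exp (-r) * ((-r)^n /\<^sub>R fact n)) / 2 = (if n \<in> {k. odd k} then ?p n else 0)"
      unfolding m by (cases "odd n") auto
  qed
  have "exp (-r) * exp (-r) = exp (-2*r)" by (simp add: exp_add[symmetric])
  then show ?thesis using sums_unique2[OF s1 s4[unfolded eq]] by simp
qed

definition hh :: "nat \<Rightarrow> nat" where "hh k = (if k = 0 then 0 else if odd k then 1 else 2)"

lemma hh_probs:
  assumes r: "(r::real) > 0"
  shows "pmf (map_pmf hh (poisson_pmf r)) 0 = exp (-r)"
    and "pmf (map_pmf hh (poisson_pmf r)) 1 = (1 - exp (-2*r)) / 2"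
    and "pmf (map_pmf hh (poisson_pmf r)) 2 = 1 - exp (-r) - (1 - exp (-2*r)) / 2"
proof -
  have z: "hh -` {0} = {0}" by (auto simp: hh_def split: if_splits)
  have o: "hh -` {1} = {k. odd k}" by (auto simp: hh_def split: if_splits intro: odd_pos)
  show p0: "pmf (map_pmf hh (poisson_pmf r)) 0 = exp (-r)"
    unfolding pmf_map z using r by (simp add: measure_pmf_single)
  show p1: "pmf (map_pmf hh (poisson_pmf r)) 1 = (1 - exp (-2*r)) / 2"
    unfolding pmf_map o using poisson_odd[OF r] .
  have "set_pmf (map_pmf hh (poisson_pmf r)) \<subseteq> {0,1,2}" by (auto simp: hh_def)
  then have "(\<Sum>x\<in>{0,1,2}. pmf (map_pmf hh (poisson_pmf r)) x) = 1" by (intro sum_pmf_eq_1) auto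
  show "pmf (map_pmf hh (poisson_pmf r)) 2 = 1 - exp (-r) - (1 - exp (-2*r)) / 2"
  proof -
    let ?f = "pmf (map_pmf hh (poisson_pmf r))"
    have "(\<Sum>x\<in>{0,1,2::nat}. ?f x) = ?f 0 + ?f 1 + ?f 2" by simp
    then show ?thesis using p0 p1 \<open>(\<Sum>x\<in>{0,1,2}. ?f x) = 1\<close> by linarith
  qed
qed

lemma meas_fin:
  assumes "set_pmf R \<subseteq> K" "finite K"
  shows "measure (measure_pmf R) X = sum (pmf R) (X \<inter> K)"
proof -
  have "measure (measure_pmf R) X = measure (measure_pmf R) (X \<inter> set_pmf R)"
    by (simp add: measure_Int_set_pmf)
  also have "X \<inter> set_pmf R = (X \<inter> K) \<inter> set_pmf R" using assms(1) by blast
  also have "measure (measure_pmf R) \<dots> = measure (measure_pmf R) (X \<inter> K)"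
    by (simp add: measure_Int_set_pmf)
  also have "\<dots> = sum (pmf R) (X \<inter> K)"
    using assms(2) by (intro measure_measure_pmf_finite) auto
  finally show ?thesis .
qed


lemma rc_formula:
  fixes V :: "'v set" and E :: "'e set" and inc :: "'e \<Rightarrow> 'v \<times> 'v" and J :: "'e \<Rightarrow> real"
  assumes fin: "finite E" and defined: "\<exists>F\<subseteq>E. bdry V E inc F = A" and J: "\<forall>e\<in>E. J e > 0"
  shows "\<exists>M>0. \<forall>\<omega>. \<omega> \<subseteq> E \<longrightarrow> pmf (random_current V E inc A J) \<omega> =
     psi V E inc A (\<lambda>e. pmf (map_pmf hh (poisson_pmf (2 * J e))) 1)
                   (\<lambda>e. pmf (map_pmf hh (poisson_pmf (2 * J e))) 2)
                   (\<lambda>e. pmf (map_pmf hh (poisson_pmf (2 * J e))) 0) \<omega> / M"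
proof -
  define D where "D = (\<lambda>e. poisson_pmf (2 * J e))"
  define P where "P = Pi_pmf E 0 D"
  define g where "g = (\<lambda>n::'e\<Rightarrow>nat. hh \<circ> n)"
  define Q where "Q = Pi_pmf E 0 (\<lambda>e. map_pmf hh (D e))"
  define S where "S = {s. sources V E inc s = A}"
  define f where "f = (\<lambda>n::'e\<Rightarrow>nat. {e\<in>E. n e > 0})"
  define q where "q = (\<lambda>j e. pmf (map_pmf hh (D e)) j)"
  have hh0: "hh 0 = 0" by (simp add: hh_def)
  have QP: "Q = map_pmf g P" unfolding Q_def P_def g_def by (rule Pi_pmf_map[where f=hh and dflt=0 and dflt'=0, OF fin hh0])
  have hhmod: "hh k mod 2 = k mod 2" for k
    by (cases "k = 0") (auto simp: hh_def mod2_eq_if)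
  have N: "{n. sources V E inc n = A} = g -` S"
  proof -
    have "sources V E inc (hh \<circ> n) = sources V E inc n" for n
      by (rule sources_mod) (simp add: hhmod)
    then show ?thesis unfolding S_def g_def by auto
  qed
  have fg: "f \<circ> g = f"
    by (rule ext) (auto simp: f_def g_def hh_def split: if_splits)
  obtain F where F: "F \<subseteq> E" "bdry V E inc F = A" using defined by blast
  define n0 where "n0 = (\<lambda>e. if e \<in> F then 1 else 0 :: nat)"
  have n0P: "n0 \<in> set_pmf P"
    unfolding P_def set_Pi_pmf[OF fin] PiE_dflt_def D_def using F(1) J by (auto simp: n0_def)
  have n0S: "g n0 \<in> S"
  proof -
    have "sources V E inc n0 = A" using F(2) unfolding bdry_def n0_def .
    then show ?thesis using N by auto
  qed
  have ne: "set_pmf P \<inter> g -` S \<noteq> {}" using n0P n0S by blast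
  have rc: "random_current V E inc A J = map_pmf f (cond_pmf Q S)"
  proof -
    have "random_current V E inc A J = map_pmf f (cond_pmf P (g -` S))"
      unfolding random_current_def P_def D_def f_def N ..
    also have "\<dots> = map_pmf (f \<circ> g) (cond_pmf P (g -` S))" by (simp only: fg)
    also have "\<dots> = map_pmf f (map_pmf g (cond_pmf P (g -` S)))" by (simp add: pmf.map_comp)
    also have "\<dots> = map_pmf f (cond_pmf Q S)" unfolding QP cond_map_pmf[OF ne] ..
    finally show ?thesis .
  qed
  have gn0Q: "g n0 \<in> set_pmf Q" unfolding QP using n0P by simp
  have neQ: "set_pmf Q \<inter> S \<noteq> {}" using gn0Q n0S by blast
  define M where "M = measure_pmf.prob Q S"
  have Mpos: "M > 0" unfolding M_def by (rule measure_pmf_posI[OF gn0Q n0S])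
  define T where "T = PiE_dflt E 0 (\<lambda>_. {0,1,2::nat})"
  have finT: "finite T" unfolding T_def using fin by auto
  have setQ: "set_pmf Q \<subseteq> T"
    unfolding Q_def set_Pi_pmf[OF fin] T_def PiE_dflt_def by (auto simp: hh_def)
  have pmfQ: "pmf Q s = (\<Prod>e\<in>E. q (s e) e)" if "s \<in> T" for s
    using that unfolding Q_def pmf_Pi[OF fin] T_def PiE_dflt_def q_def by auto
  have main: "pmf (random_current V E inc A J) \<omega> = psi V E inc A (q 1) (q 2) (q 0) \<omega> / M"
    if om: "\<omega> \<subseteq> E" for \<omega>
  proof -
    have setc: "set_pmf (cond_pmf Q S) \<subseteq> T \<inter> S" using setQ set_cond_pmf[OF neQ] by auto
    have "pmf (random_current V E inc A J) \<omega> = measure_pmf.prob (cond_pmf Q S) (f -` {\<omega>})"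
      unfolding rc pmf_map ..
    also have "\<dots> = sum (pmf (cond_pmf Q S)) (f -` {\<omega>} \<inter> (T \<inter> S))"
      by (rule meas_fin[OF setc]) (use finT in auto)
    also have "\<dots> = (\<Sum>s\<in>f -` {\<omega>} \<inter> (T \<inter> S). (\<Prod>e\<in>E. q (s e) e)) / M"
      unfolding sum_divide_distrib
      by (rule sum.cong[OF refl]) (auto simp: pmf_cond[OF neQ] pmfQ M_def)
    also have "(\<Sum>s\<in>f -` {\<omega>} \<inter> (T \<inter> S). (\<Prod>e\<in>E. q (s e) e))
        = (\<Sum>a\<in>{a\<in>Pow \<omega>. bdry V E inc a = A}. (\<Prod>e\<in>a. q 1 e) * (\<Prod>e\<in>\<omega>-a. q 2 e) * (\<Prod>e\<in>E-\<omega>. q 0 e))"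
    proof -
      define \<sigma> where "\<sigma> = (\<lambda>a e. if e \<in> a then 1 else if e \<in> \<omega> then 2 else (0::nat))"
      define \<tau> where "\<tau> = (\<lambda>s::'e\<Rightarrow>nat. {e\<in>E. s e = 1})"
      have src: "sources V E inc (\<sigma> a) = bdry V E inc a" for a
        unfolding bdry_def by (rule sources_mod) (auto simp: \<sigma>_def)
      have bij: "bij_betw \<sigma> {a\<in>Pow \<omega>. bdry V E inc a = A} (f -` {\<omega>} \<inter> (T \<inter> S))"
      proof (rule bij_betw_byWitness[where f'=\<tau>])
        show "\<forall>a\<in>{a\<in>Pow \<omega>. bdry V E inc a = A}. \<tau> (\<sigma> a) = a"
          using om by (auto simp: \<tau>_def \<sigma>_def)
        show "\<forall>s\<in>f -` {\<omega>} \<inter> (T \<inter> S). \<sigma> (\<tau> s) = s"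
        proof
          fix s assume s: "s \<in> f -` {\<omega>} \<inter> (T \<inter> S)"
          then have sT: "\<forall>e. (e \<in> E \<longrightarrow> s e \<in> {0,1,2}) \<and> (e \<notin> E \<longrightarrow> s e = 0)"
            unfolding T_def PiE_dflt_def by auto
          have fs: "{e\<in>E. s e > 0} = \<omega>" using s unfolding f_def by auto
          show "\<sigma> (\<tau> s) = s"
          proof
            fix e show "\<sigma> (\<tau> s) e = s e"
              using sT[rule_format, of e] fs om unfolding \<sigma>_def \<tau>_def by auto
          qed
        qed
        show "\<sigma> ` {a\<in>Pow \<omega>. bdry V E inc a = A} \<subseteq> f -` {\<omega>} \<inter> (T \<inter> S)"
        proof
          fix s assume "s \<in> \<sigma> ` {a\<in>Pow \<omega>. bdry V E inc a = A}"
          then obtain a where a: "a \<subseteq> \<omega>" "bdry V E inc a = A" and sa: "s = \<sigma> a" by auto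
          have "f s = \<omega>" using a om unfolding sa f_def \<sigma>_def by auto
          moreover have "s \<in> T" using a om unfolding sa T_def PiE_dflt_def \<sigma>_def by auto
          moreover have "s \<in> S" using a src unfolding sa S_def by auto
          ultimately show "s \<in> f -` {\<omega>} \<inter> (T \<inter> S)" by auto
        qed
        show "\<tau> ` (f -` {\<omega>} \<inter> (T \<inter> S)) \<subseteq> {a\<in>Pow \<omega>. bdry V E inc a = A}"
        proof
          fix a assume "a \<in> \<tau> ` (f -` {\<omega>} \<inter> (T \<inter> S))"
          then obtain s where s: "s \<in> f -` {\<omega>} \<inter> (T \<inter> S)" and as: "a = \<tau> s" by auto
          then have sT: "\<forall>e. (e \<in> E \<longrightarrow> s e \<in> {0,1,2}) \<and> (e \<notin> E \<longrightarrow> s e = 0)"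
            unfolding T_def PiE_dflt_def by auto
          have fs: "{e\<in>E. s e > 0} = \<omega>" using s unfolding f_def by auto
          have "a \<subseteq> \<omega>" using fs unfolding as \<tau>_def by auto
          moreover have "bdry V E inc a = sources V E inc s"
            unfolding bdry_def as \<tau>_def
            by (rule sources_mod) (use sT in auto)
          moreover have "sources V E inc s = A" using s unfolding S_def by auto
          ultimately show "a \<in> {a\<in>Pow \<omega>. bdry V E inc a = A}" by auto
        qed
      qed
      have "(\<Sum>s\<in>f -` {\<omega>} \<inter> (T \<inter> S). (\<Prod>e\<in>E. q (s e) e))
          = (\<Sum>a\<in>{a\<in>Pow \<omega>. bdry V E inc a = A}. (\<Prod>e\<in>E. q (\<sigma> a e) e))"
        by (rule sum.reindex_bij_betw[OF bij, symmetric])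
      also have "\<dots> = (\<Sum>a\<in>{a\<in>Pow \<omega>. bdry V E inc a = A}. (\<Prod>e\<in>a. q 1 e) * (\<Prod>e\<in>\<omega>-a. q 2 e) * (\<Prod>e\<in>E-\<omega>. q 0 e))"
      proof (rule sum.cong[OF refl])
        fix a assume "a \<in> {a\<in>Pow \<omega>. bdry V E inc a = A}"
        then have a: "a \<subseteq> \<omega>" by auto
        have fo: "finite \<omega>" using fin om finite_subset by blast
        have "(\<Prod>e\<in>E. q (\<sigma> a e) e) = (\<Prod>e\<in>E-\<omega>. q (\<sigma> a e) e) * (\<Prod>e\<in>\<omega>. q (\<sigma> a e) e)"
          by (rule prod.subset_diff[OF om fin])
        also have "(\<Prod>e\<in>\<omega>. q (\<sigma> a e) e) = (\<Prod>e\<in>\<omega>-a. q (\<sigma> a e) e) * (\<Prod>e\<in>a. q (\<sigma> a e) e)"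
          by (rule prod.subset_diff[OF a fo])
        also have "(\<Prod>e\<in>E-\<omega>. q (\<sigma> a e) e) = (\<Prod>e\<in>E-\<omega>. q 0 e)"
          using a by (intro prod.cong) (auto simp: \<sigma>_def)
        also have "(\<Prod>e\<in>\<omega>-a. q (\<sigma> a e) e) = (\<Prod>e\<in>\<omega>-a. q 2 e)"
          by (intro prod.cong) (auto simp: \<sigma>_def)
        also have "(\<Prod>e\<in>a. q (\<sigma> a e) e) = (\<Prod>e\<in>a. q 1 e)"
          by (intro prod.cong) (auto simp: \<sigma>_def)
        finally show "(\<Prod>e\<in>E. q (\<sigma> a e) e) = (\<Prod>e\<in>a. q 1 e) * (\<Prod>e\<in>\<omega>-a. q 2 e) * (\<Prod>e\<in>E-\<omega>. q 0 e)"
          by (simp add: mult_ac)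
      qed
      finally show ?thesis .
    qed
    finally show ?thesis unfolding psi_def .
  qed
  show ?thesis using Mpos main unfolding q_def D_def by blast
qed


lemma alg3:
  fixes w :: real assumes w: "w > 0"
  defines "s \<equiv> (1 - w) / (1 + w)"
  shows "(1 - w * w) / 2 = 2 * ((1 + w)^2 / 4) * s"
    and "1 - w - (1 - w * w) / 2 = 2 * ((1 + w)^2 / 4) * s^2"
    and "w = (1 + w)^2 / 4 * (1 - s^2)"
proof -
  have hs: "(1 + w) * s = 1 - w" unfolding s_def using w by simp
  have a: "2 * ((1 + w)^2 / 4) * s = ((1 + w) * s) * (1 + w) / 2" by (simp add: power2_eq_square)
  show "(1 - w * w) / 2 = 2 * ((1 + w)^2 / 4) * s" unfolding a hs by (simp add: algebra_simps)
  have b: "2 * ((1 + w)^2 / 4) * s^2 = ((1 + w) * s)^2 / 2" by (simp add: power2_eq_square)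
  show "1 - w - (1 - w * w) / 2 = 2 * ((1 + w)^2 / 4) * s^2" unfolding b hs by (simp add: power2_eq_square field_simps)
  have c: "(1 + w)^2 / 4 * (1 - s^2) = ((1 + w)^2 - ((1 + w) * s)^2) / 4" by (simp add: power2_eq_square algebra_simps)
  show "w = (1 + w)^2 / 4 * (1 - s^2)" unfolding c hs by (simp add: power2_eq_square algebra_simps)
qed

lemma Z_pos:
  assumes fin: "finite E" and defined: "\<exists>F\<subseteq>E. bdry V E inc F = A" and y: "\<forall>e\<in>E. y e > 0"
  shows "(\<Sum>F\<in>Pow E. loop_weight V E inc A y F) > 0"
proof -
  obtain F where F: "F \<subseteq> E" "bdry V E inc F = A" using defined by blast
  have nn: "loop_weight V E inc A y G \<ge> 0" if "G \<in> Pow E" for G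
  proof -
    have "\<forall>e\<in>G. 0 \<le> y e" using that y by (metis PowD subsetD less_imp_le)
    then show ?thesis unfolding loop_weight_def by (simp add: prod_nonneg)
  qed
  have yF: "\<forall>e\<in>F. y e > 0" using F y by auto
  have "loop_weight V E inc A y F > 0"
  proof -
    have "prod y F > 0" using yF by (intro prod_pos) auto
    then show ?thesis using F unfolding loop_weight_def by auto
  qed
  also have "loop_weight V E inc A y F \<le> (\<Sum>F\<in>Pow E. loop_weight V E inc A y F)"
    by (rule member_le_sum) (use F fin nn in auto)
  finally show ?thesis .
qed

theorem lemmaA2:
  fixes V :: "'v set" and E :: "'e set" and inc :: "'e \<Rightarrow> 'v \<times> 'v"
    and A :: "'v set" and x p :: "'e \<Rightarrow> real"
  assumes G: "graph V E inc"
    and A: "A \<subseteq> V" "even (card A)"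
    and defined: "\<exists>F\<subseteq>E. bdry V E inc F = A"
    and x: "\<forall>e\<in>E. x e > 0"
    and p: "\<forall>e\<in>E. 0 \<le> p e \<and> p e < 1"
  shows "proportional E
           (\<lambda>\<omega>. 2 ^ card \<omega> * union_law E (loop_measure V E inc A x) (perc E p) \<omega>)
           (union_law E (loop_measure V E inc A (\<lambda>e. 2 * x e / (1 + p e)))
                        (perc E (\<lambda>e. 2 * p e / (1 + p e))))
       \<and> (\<forall>J :: 'e \<Rightarrow> real. (\<forall>e\<in>E. J e > 0) \<longrightarrow>
            proportional E
              (\<lambda>\<omega>. 2 ^ card \<omega> * union_law E (loop_measure V E inc A (\<lambda>e. tanh (J e)))
                                     (perc E (\<lambda>e. (tanh (J e))\<^sup>2)) \<omega>)
              (\<lambda>\<omega>. pmf (random_current V E inc A J) \<omega>))"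
proof
  have fin: "finite E" using G unfolding graph_def by auto
  show "proportional E
           (\<lambda>\<omega>. 2 ^ card \<omega> * union_law E (loop_measure V E inc A x) (perc E p) \<omega>)
           (union_law E (loop_measure V E inc A (\<lambda>e. 2 * x e / (1 + p e)))
                        (perc E (\<lambda>e. 2 * p e / (1 + p e))))"
  proof -
    define Z where "Z = (\<Sum>F\<in>Pow E. loop_weight V E inc A x F)"
    define Z' where "Z' = (\<Sum>F\<in>Pow E. loop_weight V E inc A (\<lambda>e. 2 * x e / (1 + p e)) F)"
    define C where "C = (\<Prod>e\<in>E. 1 / (1 + p e))"
    have Zp: "Z > 0" unfolding Z_def by (rule Z_pos[OF fin defined x])
    have Z'p: "Z' > 0" unfolding Z'_def
      by (rule Z_pos[OF fin defined]) (use x p in \<open>auto intro!: divide_pos_pos\<close>)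
    have Cp: "C > 0" unfolding C_def using p by (auto intro!: prod_pos)
    have "\<forall>\<omega>. \<omega> \<subseteq> E \<longrightarrow> 2 ^ card \<omega> * union_law E (loop_measure V E inc A x) (perc E p) \<omega>
        = Z' / (Z * C) * union_law E (loop_measure V E inc A (\<lambda>e. 2 * x e / (1 + p e)))
                        (perc E (\<lambda>e. 2 * p e / (1 + p e))) \<omega>"
    proof (intro allI impI)
      fix \<omega> assume om: "\<omega> \<subseteq> E"
      have fo: "finite \<omega>" using fin om finite_subset by blast
      have "psi V E inc A (\<lambda>e. 2 * x e / (1 + p e)) (\<lambda>e. 2 * p e / (1 + p e)) (\<lambda>e. 1 - 2 * p e / (1 + p e)) \<omega>
          = psi V E inc A (\<lambda>e. 2 * (1 / (1 + p e)) * x e) (\<lambda>e. 2 * (1 / (1 + p e)) * p e) (\<lambda>e. (1 / (1 + p e)) * (1 - p e)) \<omega>"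
      proof (rule psi_cong[OF om])
        show "\<forall>e\<in>E. 1 - 2 * p e / (1 + p e) = 1 / (1 + p e) * (1 - p e)"
        proof
          fix e assume "e \<in> E"
          then have "1 + p e > 0" using p by force
          then show "1 - 2 * p e / (1 + p e) = 1 / (1 + p e) * (1 - p e)" by (simp add: field_simps)
        qed
      qed auto
      also have "\<dots> = (\<Prod>e\<in>\<omega>. 2) * C * psi V E inc A x p (\<lambda>e. 1 - p e) \<omega>"
        unfolding C_def by (rule psi_scale[OF fin om])
      also have "(\<Prod>e\<in>\<omega>. (2::real)) = 2 ^ card \<omega>" by simp
      finally have eq: "psi V E inc A (\<lambda>e. 2 * x e / (1 + p e)) (\<lambda>e. 2 * p e / (1 + p e)) (\<lambda>e. 1 - 2 * p e / (1 + p e)) \<omega>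
         = 2 ^ card \<omega> * C * psi V E inc A x p (\<lambda>e. 1 - p e) \<omega>" .
      show "2 ^ card \<omega> * union_law E (loop_measure V E inc A x) (perc E p) \<omega>
        = Z' / (Z * C) * union_law E (loop_measure V E inc A (\<lambda>e. 2 * x e / (1 + p e)))
                        (perc E (\<lambda>e. 2 * p e / (1 + p e))) \<omega>"
        unfolding union_psi[OF fin om] eq Z_def[symmetric] Z'_def[symmetric]
        using Zp Z'p Cp by (simp add: field_simps)
    qed
    then show ?thesis unfolding proportional_def using Zp Z'p Cp
      by (intro exI[of _ "Z' / (Z * C)"]) auto
  qed
  show "\<forall>J :: 'e \<Rightarrow> real. (\<forall>e\<in>E. J e > 0) \<longrightarrow>
            proportional E
              (\<lambda>\<omega>. 2 ^ card \<omega> * union_law E (loop_measure V E inc A (\<lambda>e. tanh (J e)))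
                                     (perc E (\<lambda>e. (tanh (J e))\<^sup>2)) \<omega>)
              (\<lambda>\<omega>. pmf (random_current V E inc A J) \<omega>)"
  proof (intro allI impI)
    fix J :: "'e \<Rightarrow> real" assume J: "\<forall>e\<in>E. J e > 0"
    obtain M where Mp: "M > 0" and rcf: "\<forall>\<omega>. \<omega> \<subseteq> E \<longrightarrow> pmf (random_current V E inc A J) \<omega> =
     psi V E inc A (\<lambda>e. pmf (map_pmf hh (poisson_pmf (2 * J e))) 1)
                   (\<lambda>e. pmf (map_pmf hh (poisson_pmf (2 * J e))) 2)
                   (\<lambda>e. pmf (map_pmf hh (poisson_pmf (2 * J e))) 0) \<omega> / M"
      using rc_formula[OF fin defined J] by blast
    define t where "t = (\<lambda>e. tanh (J e))"
    define u where "u = (\<lambda>e. exp (-2 * J e))"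
    define c where "c = (\<lambda>e. (1 + u e)^2 / 4)"
    define Zt where "Zt = (\<Sum>F\<in>Pow E. loop_weight V E inc A t F)"
    define C where "C = (\<Prod>e\<in>E. c e)"
    have Ztp: "Zt > 0" unfolding Zt_def
      by (rule Z_pos[OF fin defined]) (use J in \<open>auto simp: t_def\<close>)
    have ne1: "1 + exp z \<noteq> 0" for z :: real by (smt (verit) exp_gt_zero)
    have Cp: "C > 0" unfolding C_def c_def u_def by (intro prod_pos) (auto simp: ne1)
    have qs: "pmf (map_pmf hh (poisson_pmf (2 * J e))) 1 = 2 * c e * t e
            \<and> pmf (map_pmf hh (poisson_pmf (2 * J e))) 2 = 2 * c e * (t e)\<^sup>2
            \<and> pmf (map_pmf hh (poisson_pmf (2 * J e))) 0 = c e * (1 - (t e)\<^sup>2)" if e: "e \<in> E" for e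
    proof -
      have r: "2 * J e > 0" using J e by auto
      have u2: "exp (-2 * (2 * J e)) = u e * u e" unfolding u_def by (simp add: exp_add[symmetric])
      have u1: "exp (- (2 * J e)) = u e" unfolding u_def by simp
      have tu: "t e = (1 - u e) / (1 + u e)" unfolding t_def u_def by (rule tanh_real_altdef)
      have up: "u e > 0" unfolding u_def by simp
      then have up1: "1 + u e \<noteq> 0" by simp
      show ?thesis unfolding hh_probs[OF r] u2 u1 tu c_def by (intro conjI alg3[OF up])
    qed
    have "\<forall>\<omega>. \<omega> \<subseteq> E \<longrightarrow> 2 ^ card \<omega> * union_law E (loop_measure V E inc A (\<lambda>e. tanh (J e)))
                                     (perc E (\<lambda>e. (tanh (J e))\<^sup>2)) \<omega>
          = M / (Zt * C) * pmf (random_current V E inc A J) \<omega>"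
    proof (intro allI impI)
      fix \<omega> assume om: "\<omega> \<subseteq> E"
      have "psi V E inc A (\<lambda>e. pmf (map_pmf hh (poisson_pmf (2 * J e))) 1)
                   (\<lambda>e. pmf (map_pmf hh (poisson_pmf (2 * J e))) 2)
                   (\<lambda>e. pmf (map_pmf hh (poisson_pmf (2 * J e))) 0) \<omega>
          = psi V E inc A (\<lambda>e. 2 * c e * t e) (\<lambda>e. 2 * c e * (t e)\<^sup>2) (\<lambda>e. c e * (1 - (t e)\<^sup>2)) \<omega>"
        by (rule psi_cong[OF om]) (use qs in auto)
      also have "\<dots> = (\<Prod>e\<in>\<omega>. 2) * C * psi V E inc A t (\<lambda>e. (t e)\<^sup>2) (\<lambda>e. 1 - (t e)\<^sup>2) \<omega>"
        unfolding C_def by (rule psi_scale[OF fin om])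
      also have "(\<Prod>e\<in>\<omega>. (2::real)) = 2 ^ card \<omega>" by simp
      finally have eq: "pmf (random_current V E inc A J) \<omega> = 2 ^ card \<omega> * C * psi V E inc A t (\<lambda>e. (t e)\<^sup>2) (\<lambda>e. 1 - (t e)\<^sup>2) \<omega> / M"
        using rcf om by simp
      show "2 ^ card \<omega> * union_law E (loop_measure V E inc A (\<lambda>e. tanh (J e)))
                                     (perc E (\<lambda>e. (tanh (J e))\<^sup>2)) \<omega>
          = M / (Zt * C) * pmf (random_current V E inc A J) \<omega>"
        unfolding eq union_psi[OF fin om] t_def[symmetric] Zt_def[symmetric]
        using Mp Ztp Cp by (simp add: field_simps t_def)
    qed
    then show "proportional E
              (\<lambda>\<omega>. 2 ^ card \<omega> * union_law E (loop_measure V E inc A (\<lambda>e. tanh (J e)))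
                                     (perc E (\<lambda>e. (tanh (J e))\<^sup>2)) \<omega>)
              (\<lambda>\<omega>. pmf (random_current V E inc A J) \<omega>)"
      unfolding proportional_def using Mp Ztp Cp
      by (intro exI[of _ "M / (Zt * C)"]) auto
  qed
qed

end
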